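(* Let $R$ be a finite local ring and let $\phi,\psi$ be non-trivial additive characters of $R$. (i) If $\phi$ and $\psi$ have different conductors, then $K(\phi,\psi)=0$. (ii) If $\phi$ and $\psi$ both have conductor $I$, then $K(\phi,\psi)=|I|\,K(\phi',\psi')$, where $\phi',\psi'$ are the primitive characters of $R/I$ inducing $\phi,\psi$, and $K(\phi',\psi')$ is the Kloosterman sum over $R/I$.
   Context: All rings are finite and commutative with identity; $S^\times$ is the unit group of a ring $S$. An additive character is a homomorphism $(S,+)\to\mathbb{C}^*$; its conductor is the largest ideal on which it is identically $1$; it is primitive if its conductor is $(0)$. A character of $R$ with conductor $I$ factors through a primitive character of $R/I$. The Kloosterman sum over $S$ is $K(\phi,\psi)=\sum_{u\in S^\times}\phi(u)\psi(u^{-1})$. *)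

theory Defs
  imports Complex_Main
begin

definition r_ideal :: "'a::comm_ring_1 set \<Rightarrow> bool" where
  "r_ideal I \<longleftrightarrow> 0 \<in> I \<and> (\<forall>x\<in>I. \<forall>y\<in>I. x + y \<in> I) \<and> (\<forall>r. \<forall>x\<in>I. r * x \<in> I)"

definition r_maximal_ideal :: "'a::comm_ring_1 set \<Rightarrow> bool" where
  "r_maximal_ideal M \<longleftrightarrow> r_ideal M \<and> M \<noteq> UNIV \<and>
     (\<forall>J. r_ideal J \<and> M \<subseteq> J \<and> J \<noteq> UNIV \<longrightarrow> J = M)"

definition local_ring :: "'a::comm_ring_1 itself \<Rightarrow> bool" where
  "local_ring _ \<longleftrightarrow> (\<exists>!M::'a set. r_maximal_ideal M)"

definition additive_char :: "('a::comm_ring_1 \<Rightarrow> complex) \<Rightarrow> bool" where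
  "additive_char \<chi> \<longleftrightarrow> (\<forall>x. \<chi> x \<noteq> 0) \<and> (\<forall>x y. \<chi> (x + y) = \<chi> x * \<chi> y)"

definition trivial_char :: "('a::comm_ring_1 \<Rightarrow> complex) \<Rightarrow> bool" where
  "trivial_char \<chi> \<longleftrightarrow> (\<forall>x. \<chi> x = 1)"

definition is_conductor :: "('a::comm_ring_1 \<Rightarrow> complex) \<Rightarrow> 'a set \<Rightarrow> bool" where
  "is_conductor \<chi> I \<longleftrightarrow> r_ideal I \<and> (\<forall>x\<in>I. \<chi> x = 1) \<and>
     (\<forall>J. r_ideal J \<and> (\<forall>x\<in>J. \<chi> x = 1) \<longrightarrow> J \<subseteq> I)"

definition conductor :: "('a::comm_ring_1 \<Rightarrow> complex) \<Rightarrow> 'a set" where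
  "conductor \<chi> = (THE I. is_conductor \<chi> I)"

definition primitive_char :: "('a::comm_ring_1 \<Rightarrow> complex) \<Rightarrow> bool" where
  "primitive_char \<chi> \<longleftrightarrow> conductor \<chi> = {0}"

definition ring_units :: "'a::comm_ring_1 set" where
  "ring_units = {u. u dvd 1}"

definition unit_inv :: "'a::comm_ring_1 \<Rightarrow> 'a" where
  "unit_inv u = (THE v. u * v = 1)"

definition kloosterman ::
  "('a::comm_ring_1 \<Rightarrow> complex) \<Rightarrow> ('a \<Rightarrow> complex) \<Rightarrow> complex" where
  "kloosterman \<phi> \<psi> = (\<Sum>u\<in>ring_units. \<phi> u * \<psi> (unit_inv u))"

definition ring_hom_fun :: "('a::comm_ring_1 \<Rightarrow> 'b::comm_ring_1) \<Rightarrow> bool" where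
  "ring_hom_fun f \<longleftrightarrow> f 1 = 1 \<and> (\<forall>x y. f (x + y) = f x + f y) \<and> (\<forall>x y. f (x * y) = f x * f y)"

end

theory Submission
  imports Defs
begin


lemma unit_inv_eq: "(u::'a::comm_ring_1) * v = 1 \<Longrightarrow> unit_inv u = v"
  unfolding unit_inv_def
proof (rule the_equality)
  fix w assume "u * v = 1" "u * w = 1"
  then have "w = w * (u * v)" by simp
  also have "\<dots> = (u * w) * v" by (simp add: ac_simps)
  finally show "w = v" using \<open>u * w = 1\<close> by simp
qed

lemma unit_inv: "(u::'a::comm_ring_1) \<in> ring_units \<Longrightarrow> u * unit_inv u = 1"
proof -
  assume "u \<in> ring_units"
  then obtain v where "1 = u * v" unfolding ring_units_def by (auto elim: dvdE)
  then have "u * v = 1" by simp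
  then show ?thesis using unit_inv_eq[of u v] by simp
qed

lemma unit_inv_unit: "(u::'a::comm_ring_1) \<in> ring_units \<Longrightarrow> unit_inv u \<in> ring_units"
proof -
  assume "u \<in> ring_units"
  then have "unit_inv u * u = 1" using unit_inv[of u] by (simp add: mult.commute)
  then have "unit_inv u dvd 1" using dvd_triv_left[of "unit_inv u" u] by simp
  then show ?thesis unfolding ring_units_def by simp
qed

lemma unit_inv_inv: "(u::'a::comm_ring_1) \<in> ring_units \<Longrightarrow> unit_inv (unit_inv u) = u"
proof -
  assume "u \<in> ring_units"
  then have "unit_inv u * u = 1" using unit_inv[of u] by (simp add: mult.commute)
  then show ?thesis by (rule unit_inv_eq)
qed

lemma units_mult: "(u::'a::comm_ring_1) \<in> ring_units \<Longrightarrow> v \<in> ring_units \<Longrightarrow> u * v \<in> ring_units"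
  unfolding ring_units_def using mult_dvd_mono[of u 1 v 1] by simp

lemma unit_inv_mult: "(u::'a::comm_ring_1) \<in> ring_units \<Longrightarrow> v \<in> ring_units \<Longrightarrow> unit_inv (u*v) = unit_inv u * unit_inv v"
proof -
  assume a: "u \<in> ring_units" "v \<in> ring_units"
  have "(u * v) * (unit_inv u * unit_inv v) = (u * unit_inv u) * (v * unit_inv v)" by (simp add: algebra_simps)
  also have "\<dots> = 1" using unit_inv[OF a(1)] unit_inv[OF a(2)] by simp
  finally show ?thesis by (rule unit_inv_eq)
qed

lemma char_0: "additive_char \<chi> \<Longrightarrow> \<chi> 0 = 1"
proof -
  assume "additive_char \<chi>"
  then have "\<chi> (0 + 0) = \<chi> 0 * \<chi> 0" "\<chi> 0 \<noteq> 0" unfolding additive_char_def by blast+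
  then show ?thesis by simp
qed

lemma ideal_neg: "r_ideal I \<Longrightarrow> x \<in> I \<Longrightarrow> - x \<in> I"
proof -
  assume "r_ideal I" "x \<in> I"
  then have "(-1) * x \<in> I" unfolding r_ideal_def by blast
  then show ?thesis by simp
qed

lemma ideal_diff: "r_ideal I \<Longrightarrow> x \<in> I \<Longrightarrow> y \<in> I \<Longrightarrow> x - y \<in> I"
proof -
  assume "r_ideal I" "x \<in> I" "y \<in> I"
  then have "x + (- y) \<in> I" using ideal_neg[of I y] unfolding r_ideal_def by blast
  then show ?thesis by simp
qed

lemma conductor_is: assumes "additive_char (\<chi>::'a::comm_ring_1 \<Rightarrow> complex)"
  shows "is_conductor \<chi> (conductor \<chi>)"
proof -
  define C where "C = {x. \<forall>r. \<chi> (r*x) = 1}"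
  have ch: "\<chi> (a + b) = \<chi> a * \<chi> b" for a b using assms unfolding additive_char_def by blast
  have "r_ideal C" unfolding r_ideal_def C_def
    using char_0[OF assms] by (auto simp: distrib_left ch mult.assoc[symmetric])
  moreover have "\<forall>x\<in>C. \<chi> x = 1" unfolding C_def by (auto dest: spec[of _ 1])
  moreover have "\<forall>J. r_ideal J \<and> (\<forall>x\<in>J. \<chi> x = 1) \<longrightarrow> J \<subseteq> C"
    unfolding C_def r_ideal_def by auto
  ultimately have c: "is_conductor \<chi> C" unfolding is_conductor_def by blast
  have "conductor \<chi> = C" unfolding conductor_def
    apply (rule the_equality[of "is_conductor \<chi>" C, OF c])
    using c unfolding is_conductor_def by blast
  then show ?thesis using c by simp
qed

lemma conductor_proper: "is_conductor \<chi> I \<Longrightarrow> \<not> trivial_char \<chi> \<Longrightarrow> I \<noteq> UNIV"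
  unfolding is_conductor_def trivial_char_def by auto

lemma exists_max_ideal:
  assumes "r_ideal (J::'a::{comm_ring_1,finite} set)" "J \<noteq> UNIV"
  shows "\<exists>M. r_maximal_ideal M \<and> J \<subseteq> M"
proof -
  define S where "S = {K::'a set. r_ideal K \<and> J \<subseteq> K \<and> K \<noteq> UNIV}"
  have fin: "finite S" by simp
  have ne: "J \<in> S" using assms unfolding S_def by auto
  define m where "m = Max (card ` S)"
  have "m \<in> card ` S" unfolding m_def using fin ne by (intro Max_in) auto
  then obtain K where K: "K \<in> S" "card K = m" by auto
  have le: "card K' \<le> card K" if "K' \<in> S" for K'
    using K that fin unfolding m_def by simp
  have "r_maximal_ideal K" unfolding r_maximal_ideal_def
  proof (intro conjI allI impI)
    show "r_ideal K" "K \<noteq> UNIV" using K unfolding S_def by auto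
    fix L assume L: "r_ideal L \<and> K \<subseteq> L \<and> L \<noteq> UNIV"
    then have "L \<in> S" using K unfolding S_def by auto
    then have "card L \<le> card K" by (rule le)
    then show "L = K" using L card_seteq[of L K] by auto
  qed
  then show ?thesis using K unfolding S_def by auto
qed

lemma local_one_plus:
  assumes loc: "local_ring TYPE('a::{comm_ring_1,finite})"
    and I: "r_ideal (I::'a set)" "I \<noteq> UNIV" and y: "y \<in> I"
  shows "1 + y \<in> ring_units"
proof (rule ccontr)
  assume nu: "1 + y \<notin> ring_units"
  have ex: "\<exists>!M::'a set. r_maximal_ideal M" using loc unfolding local_ring_def .
  then obtain M :: "'a set" where M: "r_maximal_ideal M" and uniq: "\<forall>N. r_maximal_ideal N \<longrightarrow> N = M"
    by (rule ex1E) blast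
  obtain M1 where "r_maximal_ideal M1" "I \<subseteq> M1" using exists_max_ideal[OF I] by blast
  then have IM: "I \<subseteq> M" using uniq by blast
  define P where "P = range (\<lambda>r. (1 + y) * r)"
  have P0: "0 \<in> P" unfolding P_def by (rule image_eqI[of _ _ 0]) simp_all
  have Padd: "a + b \<in> P" if ab: "a \<in> P" "b \<in> P" for a b
  proof -
    obtain r s where "a = (1 + y) * r" "b = (1 + y) * s" using ab unfolding P_def by blast
    then have "a + b = (1 + y) * (r + s)" by (simp add: distrib_left)
    then show ?thesis unfolding P_def by (rule image_eqI) simp
  qed
  have Pmul: "c * a \<in> P" if ap: "a \<in> P" for a c
  proof -
    obtain r where "a = (1 + y) * r" using ap unfolding P_def by blast
    then have "c * a = (1 + y) * (c * r)" by (simp add: mult.left_commute)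
    then show ?thesis unfolding P_def by (rule image_eqI) simp
  qed
  have P: "r_ideal P" unfolding r_ideal_def using P0 Padd Pmul by blast
  have "P \<noteq> UNIV"
  proof
    assume "P = UNIV"
    then have "1 \<in> P" by simp
    then obtain r where "1 = (1 + y) * r" unfolding P_def by blast
    then have "(1 + y) dvd 1" by (rule dvdI)
    then show False using nu unfolding ring_units_def by simp
  qed
  then obtain M2 where "r_maximal_ideal M2" "P \<subseteq> M2" using exists_max_ideal[OF P] by blast
  then have PM: "P \<subseteq> M" using uniq by blast
  have "1 + y \<in> P" unfolding P_def by (rule image_eqI[of _ _ 1]) simp_all
  then have "1 + y \<in> M" using PM by blast
  moreover have "y \<in> M" using IM y by blast
  moreover have MI: "r_ideal M" using M unfolding r_maximal_ideal_def by simp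
  ultimately have "(1 + y) - y \<in> M" using ideal_diff[of M "1+y" y] by simp
  then have M1: "1 \<in> M" by simp
  have "x \<in> M" for x
  proof -
    have "x * 1 \<in> M" using MI M1 unfolding r_ideal_def by blast
    then show ?thesis by simp
  qed
  then have "M = UNIV" by blast
  then show False using M unfolding r_maximal_ideal_def by simp
qed


lemma char_add: "additive_char \<chi> \<Longrightarrow> \<chi> (a + b) = \<chi> a * \<chi> b"
  unfolding additive_char_def by blast

lemma ideal_mult: "r_ideal I \<Longrightarrow> x \<in> I \<Longrightarrow> r * x \<in> I"
  unfolding r_ideal_def by blast

lemma ideal_add: "r_ideal I \<Longrightarrow> x \<in> I \<Longrightarrow> y \<in> I \<Longrightarrow> x + y \<in> I"
  unfolding r_ideal_def by blast

lemma shift: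
  assumes loc: "local_ring TYPE('a::{comm_ring_1,finite})"
    and cp: "additive_char (\<phi>::'a \<Rightarrow> complex)" and cq: "additive_char \<psi>"
    and cond: "is_conductor \<phi> I" and prp: "I \<noteq> UNIV" and y: "y \<in> I"
  shows "kloosterman \<phi> \<psi> = (\<Sum>u\<in>ring_units. \<phi> u * \<psi> (unit_inv u) * \<psi> (unit_inv u * y))"
proof -
  have I: "r_ideal I" and triv: "\<And>x. x \<in> I \<Longrightarrow> \<phi> x = 1"
    using cond unfolding is_conductor_def by auto
  have u1: "1 + y \<in> ring_units" by (rule local_one_plus[OF loc I prp y])
  define w where "w = unit_inv (1 + y)"
  have e: "(1 + y) * w = 1" unfolding w_def using unit_inv[OF u1] .
  have wu: "w \<in> ring_units" unfolding w_def using unit_inv_unit[OF u1] .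
  have wi: "unit_inv w = 1 + y" unfolding w_def using unit_inv_inv[OF u1] .
  have "kloosterman \<phi> \<psi> = (\<Sum>u\<in>ring_units. \<phi> (u*w) * \<psi> (unit_inv (u*w)))"
    unfolding kloosterman_def
  proof (rule sum.reindex_bij_witness[where i="\<lambda>b. b * w" and j="\<lambda>a. a * (1 + y)"])
    fix a :: 'a
    show "a * (1 + y) * w = a" using e by (simp add: mult.assoc)
    have "a * w * (1 + y) = a * ((1 + y) * w)" by (simp add: algebra_simps)
    then show "a * w * (1 + y) = a" using e by simp
    assume "a \<in> ring_units"
    then show "a * (1 + y) \<in> ring_units" "a * w \<in> ring_units" using u1 wu units_mult by auto
    have "a * (1 + y) * w = a" using e by (simp add: mult.assoc)
    then show "\<phi> (a * (1 + y) * w) * \<psi> (unit_inv (a * (1 + y) * w)) = \<phi> a * \<psi> (unit_inv a)" by simp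
  qed
  also have "\<dots> = (\<Sum>u\<in>ring_units. \<phi> u * \<psi> (unit_inv u) * \<psi> (unit_inv u * y))"
  proof (rule sum.cong[OF refl])
    fix u :: 'a assume u: "u \<in> ring_units"
    have "unit_inv (u*w) = unit_inv u * (1 + y)" using unit_inv_mult[OF u wu] wi by simp
    then have 1: "\<psi> (unit_inv (u*w)) = \<psi> (unit_inv u) * \<psi> (unit_inv u * y)"
      using char_add[OF cq] by (simp add: distrib_left)
    have "w = 1 - w * y" using e by (simp add: algebra_simps)
    then have "u * w = u * (1 - w * y)" by simp
    then have "u * w = u + (- (u*w)) * y" by (simp add: algebra_simps)
    moreover have "\<phi> ((- (u*w)) * y) = 1" using triv ideal_mult[OF I y] by blast
    ultimately have 2: "\<phi> (u*w) = \<phi> u" using char_add[OF cp, of u "(- (u*w)) * y"] by simp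
    show "\<phi> (u*w) * \<psi> (unit_inv (u*w)) = \<phi> u * \<psi> (unit_inv u) * \<psi> (unit_inv u * y)"
      using 1 2 by simp
  qed
  finally show ?thesis .
qed

lemma vanish:
  assumes loc: "local_ring TYPE('a::{comm_ring_1,finite})"
    and cp: "additive_char (\<phi>::'a \<Rightarrow> complex)" and cq: "additive_char \<psi>"
    and cond: "is_conductor \<phi> I" and prp: "I \<noteq> UNIV" and a: "a \<in> I" "\<psi> a \<noteq> 1"
  shows "kloosterman \<phi> \<psi> = 0"
proof -
  have I: "r_ideal I" using cond unfolding is_conductor_def by auto
  define S where "S = (\<Sum>y\<in>I. \<psi> y)"
  have "S = (\<Sum>y\<in>I. \<psi> (a + y))" unfolding S_def
  proof (rule sum.reindex_bij_witness[where j="\<lambda>b. b - a" and i="\<lambda>b. a + b"])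
    fix b assume "b \<in> I"
    then show "b - a \<in> I" "a + b \<in> I" using ideal_diff[OF I] ideal_add[OF I] a by auto
  qed auto
  also have "\<dots> = \<psi> a * S" unfolding S_def by (simp add: char_add[OF cq] sum_distrib_left)
  finally have "(1 - \<psi> a) * S = 0" by (simp add: algebra_simps)
  then have S0: "S = 0" using a by simp
  have inner: "(\<Sum>y\<in>I. \<psi> (c * y)) = S" if c: "c \<in> ring_units" for c
    unfolding S_def
  proof (rule sum.reindex_bij_witness[where i="\<lambda>b. unit_inv c * b" and j="\<lambda>b. c * b"])
    have e: "c * unit_inv c = 1" using unit_inv[OF c] .
    fix b
    have "unit_inv c * (c * b) = (c * unit_inv c) * b" "c * (unit_inv c * b) = (c * unit_inv c) * b"
      by (simp_all add: algebra_simps)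
    then show "unit_inv c * (c * b) = b" "c * (unit_inv c * b) = b" using e by simp_all
    assume "b \<in> I"
    then show "unit_inv c * b \<in> I" "c * b \<in> I" using ideal_mult[OF I] by auto
  qed simp
  have "of_nat (card I) * kloosterman \<phi> \<psi> = (\<Sum>y\<in>I. kloosterman \<phi> \<psi>)" by simp
  also have "\<dots> = (\<Sum>y\<in>I. \<Sum>u\<in>ring_units. \<phi> u * \<psi> (unit_inv u) * \<psi> (unit_inv u * y))"
    using shift[OF loc cp cq cond prp] by (intro sum.cong) auto
  also have "\<dots> = (\<Sum>u\<in>ring_units. \<Sum>y\<in>I. \<phi> u * \<psi> (unit_inv u) * \<psi> (unit_inv u * y))"
    by (rule sum.swap)
  also have "\<dots> = (\<Sum>u\<in>ring_units. \<phi> u * \<psi> (unit_inv u) * (\<Sum>y\<in>I. \<psi> (unit_inv u * y)))"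
    by (simp add: sum_distrib_left)
  also have "\<dots> = 0" using inner unit_inv_unit S0 by (intro sum.neutral) auto
  finally have "of_nat (card I) * kloosterman \<phi> \<psi> = 0" .
  moreover have "card I \<noteq> 0" using I unfolding r_ideal_def by auto
  ultimately show ?thesis by simp
qed

lemma kl_sym: "kloosterman \<phi> \<psi> = kloosterman \<psi> (\<phi>::'a::comm_ring_1 \<Rightarrow> complex)"
  unfolding kloosterman_def
  by (rule sum.reindex_bij_witness[where i=unit_inv and j=unit_inv])
     (auto simp: unit_inv_inv unit_inv_unit)




lemma hom_basic:
  assumes "ring_hom_fun (\<pi>::'a::comm_ring_1 \<Rightarrow> 'b::comm_ring_1)"
  shows "\<pi> 0 = 0" "\<pi> (x - y) = \<pi> x - \<pi> y" "\<pi> (x + y) = \<pi> x + \<pi> y" "\<pi> (x * y) = \<pi> x * \<pi> y" "\<pi> 1 = 1"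
proof -
  have a: "\<And>x y. \<pi> (x + y) = \<pi> x + \<pi> y" using assms unfolding ring_hom_fun_def by blast
  show "\<pi> 0 = 0" using a[of 0 0] by simp
  show "\<pi> (x - y) = \<pi> x - \<pi> y" using a[of "x - y" y] by (simp add: eq_diff_eq)
  show "\<pi> (x + y) = \<pi> x + \<pi> y" by (rule a)
  show "\<pi> (x * y) = \<pi> x * \<pi> y" "\<pi> 1 = 1" using assms unfolding ring_hom_fun_def by blast+
qed

lemma part2:
  assumes loc: "local_ring TYPE('a::{comm_ring_1,finite})"
    and I: "r_ideal (I::'a set)" and prp: "I \<noteq> UNIV"
    and hom: "ring_hom_fun (\<pi>::'a \<Rightarrow> 'b::comm_ring_1)" and sj: "surj \<pi>" and ker: "{x. \<pi> x = 0} = I"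
    and ph: "\<phi> = \<phi>' \<circ> \<pi>" and ps: "\<psi> = \<psi>' \<circ> \<pi>"
  shows "kloosterman \<phi> \<psi> = of_nat (card I) * kloosterman \<phi>' \<psi>'"
proof -
  note hb = hom_basic[OF hom]
  have finb: "finite (A::'b set)" for A
  proof -
    have "finite (range \<pi>)" by simp
    then have "finite (UNIV::'b set)" using sj by simp
    then show ?thesis by (rule finite_subset[OF subset_UNIV])
  qed
  have kerI: "\<pi> x = 0 \<longleftrightarrow> x \<in> I" for x using ker by blast
  have pu: "z \<in> ring_units" if "\<pi> z \<in> ring_units" for z
  proof -
    obtain x where x: "\<pi> x = unit_inv (\<pi> z)" using surjD[OF sj, of "unit_inv (\<pi> z)"] by auto
    have "\<pi> (z * x - 1) = \<pi> z * \<pi> x - 1" by (simp only: hb(2) hb(4) hb(5))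
    also have "\<dots> = 0" using unit_inv[OF that] x by simp
    finally have "\<pi> (z * x - 1) = 0" .
    then have "z * x - 1 \<in> I" using kerI by blast
    then have "1 + (z * x - 1) \<in> ring_units" by (rule local_one_plus[OF loc I prp])
    then have "z * x dvd 1" unfolding ring_units_def by simp
    then have "z dvd 1" by (rule dvd_mult_left)
    then show ?thesis unfolding ring_units_def by simp
  qed
  have ui: "\<pi> (unit_inv u) = unit_inv (\<pi> u)" if "u \<in> ring_units" for u
  proof -
    have "\<pi> u * \<pi> (unit_inv u) = 1" using unit_inv[OF that] hb(4)[of u "unit_inv u"] hb(5) by simp
    then show ?thesis by (rule unit_inv_eq[symmetric])
  qed
  have imu: "\<pi> u \<in> ring_units" if "u \<in> ring_units" for u
  proof -
    have "\<pi> u * \<pi> (unit_inv u) = 1" using unit_inv[OF that] hb(4)[of u "unit_inv u"] hb(5) by simp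
    then have "\<pi> u dvd 1" using dvd_triv_left[of "\<pi> u" "\<pi> (unit_inv u)"] by simp
    then show ?thesis unfolding ring_units_def by simp
  qed
  define f where "f v = \<phi>' v * \<psi>' (unit_inv v)" for v
  have "kloosterman \<phi> \<psi> = (\<Sum>u\<in>ring_units. f (\<pi> u))"
    unfolding kloosterman_def f_def ph ps using ui by (intro sum.cong) auto
  also have "\<dots> = (\<Sum>v\<in>ring_units. \<Sum>u\<in>{u. u \<in> ring_units \<and> \<pi> u = v}. f (\<pi> u))"
    by (rule sum.group[symmetric]) (use finb imu in auto)
  also have "\<dots> = (\<Sum>v\<in>ring_units. of_nat (card I) * f v)"
  proof (rule sum.cong[OF refl])
    fix v :: 'b assume v: "v \<in> ring_units"
    obtain u0 where u0: "\<pi> u0 = v" using surjD[OF sj, of v] by auto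
    have fib: "{u. u \<in> ring_units \<and> \<pi> u = v} = (\<lambda>i. u0 + i) ` I"
    proof (intro set_eqI iffI)
      fix u assume "u \<in> {u. u \<in> ring_units \<and> \<pi> u = v}"
      then have "\<pi> u = v" by simp
      then have "\<pi> (u - u0) = 0" using u0 by (simp only: hb(2)) simp
      then have "u - u0 \<in> I" using kerI by blast
      then show "u \<in> (\<lambda>i. u0 + i) ` I" by (rule rev_image_eqI) simp
    next
      fix u assume "u \<in> (\<lambda>i. u0 + i) ` I"
      then obtain i where i: "i \<in> I" "u = u0 + i" by blast
      have "\<pi> i = 0" using kerI i(1) by blast
      then have "\<pi> u = v" using u0 i(2) by (simp only: hb(3)) simp
      then show "u \<in> {u. u \<in> ring_units \<and> \<pi> u = v}" using pu v by simp
    qed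
    have "card {u. u \<in> ring_units \<and> \<pi> u = v} = card I"
      unfolding fib by (rule card_image) (simp add: inj_on_def)
    moreover have "(\<Sum>u\<in>{u. u \<in> ring_units \<and> \<pi> u = v}. f (\<pi> u)) = of_nat (card {u. u \<in> ring_units \<and> \<pi> u = v}) * f v"
      by simp
    ultimately show "(\<Sum>u\<in>{u. u \<in> ring_units \<and> \<pi> u = v}. f (\<pi> u)) = of_nat (card I) * f v" by simp
  qed
  also have "\<dots> = of_nat (card I) * kloosterman \<phi>' \<psi>'"
    unfolding kloosterman_def f_def by (simp add: sum_distrib_left)
  finally show ?thesis .
qed

theorem mainTheorem14:
  fixes \<phi> \<psi> :: "'a::{comm_ring_1,finite} \<Rightarrow> complex"
  assumes "local_ring TYPE('a)"
    and "additive_char \<phi>" and "additive_char \<psi>"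
    and "\<not> trivial_char \<phi>" and "\<not> trivial_char \<psi>"
  shows "(conductor \<phi> \<noteq> conductor \<psi> \<longrightarrow> kloosterman \<phi> \<psi> = 0) \<and>
         (\<forall>(I::'a set) (\<pi>::'a \<Rightarrow> 'b::comm_ring_1) \<phi>' \<psi>'.
           conductor \<phi> = I \<and> conductor \<psi> = I \<and>
           ring_hom_fun \<pi> \<and> surj \<pi> \<and> {x. \<pi> x = 0} = I \<and>
           additive_char \<phi>' \<and> additive_char \<psi>' \<and>
           primitive_char \<phi>' \<and> primitive_char \<psi>' \<and>
           \<phi> = \<phi>' \<circ> \<pi> \<and> \<psi> = \<psi>' \<circ> \<pi> \<longrightarrow>
           kloosterman \<phi> \<psi> = of_nat (card I) * kloosterman \<phi>' \<psi>')"
proof (intro conjI impI allI)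
  have cI: "is_conductor \<phi> (conductor \<phi>)" by (rule conductor_is[OF assms(2)])
  have cJ: "is_conductor \<psi> (conductor \<psi>)" by (rule conductor_is[OF assms(3)])
  have pI: "conductor \<phi> \<noteq> UNIV" by (rule conductor_proper[OF cI assms(4)])
  have pJ: "conductor \<psi> \<noteq> UNIV" by (rule conductor_proper[OF cJ assms(5)])
  {
    assume ne: "conductor \<phi> \<noteq> conductor \<psi>"
    show "kloosterman \<phi> \<psi> = 0"
    proof (cases "\<exists>a\<in>conductor \<phi>. \<psi> a \<noteq> 1")
      case True
      then obtain a where "a \<in> conductor \<phi>" "\<psi> a \<noteq> 1" by blast
      then show ?thesis by (rule vanish[OF assms(1,2,3) cI pI])
    next
      case False
      have r1: "r_ideal (conductor \<phi>)" using cI unfolding is_conductor_def by simp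
      have "\<forall>x\<in>conductor \<phi>. \<psi> x = 1" using False by simp
      then have sub1: "conductor \<phi> \<subseteq> conductor \<psi>"
        using cJ r1 unfolding is_conductor_def by simp
      show ?thesis
      proof (cases "\<exists>a\<in>conductor \<psi>. \<phi> a \<noteq> 1")
        case True
        then obtain a where "a \<in> conductor \<psi>" "\<phi> a \<noteq> 1" by blast
        then have "kloosterman \<psi> \<phi> = 0" by (rule vanish[OF assms(1,3,2) cJ pJ])
        then show ?thesis by (simp add: kl_sym)
      next
        case False
        have r2: "r_ideal (conductor \<psi>)" using cJ unfolding is_conductor_def by simp
        have "\<forall>x\<in>conductor \<psi>. \<phi> x = 1" using False by simp
        then have "conductor \<psi> \<subseteq> conductor \<phi>"
          using cI r2 unfolding is_conductor_def by simp
        then show ?thesis using sub1 ne by blast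
      qed
    qed
  }
  fix I :: "'a set" and \<pi> :: "'a \<Rightarrow> 'b" and \<phi>' \<psi>'
  assume h: "conductor \<phi> = I \<and> conductor \<psi> = I \<and>
           ring_hom_fun \<pi> \<and> surj \<pi> \<and> {x. \<pi> x = 0} = I \<and>
           additive_char \<phi>' \<and> additive_char \<psi>' \<and>
           primitive_char \<phi>' \<and> primitive_char \<psi>' \<and>
           \<phi> = \<phi>' \<circ> \<pi> \<and> \<psi> = \<psi>' \<circ> \<pi>"
  have cd: "conductor \<phi> = I" using h by (rule conjunct1)
  have "r_ideal I" using cI unfolding cd is_conductor_def by simp
  moreover have "I \<noteq> UNIV" using pI cd by simp
  ultimately show "kloosterman \<phi> \<psi> = of_nat (card I) * kloosterman \<phi>' \<psi>'"
    using h by (elim conjE) (rule part2[OF assms(1)], assumption+)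
qed


end
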